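(* For $n\ge 1$ let $a(n) = n - \lfloor \sqrt{n-1} \rfloor$. Then for every $n\ge 1$, $$\sum_{i=1}^n a(i) = \big|\{(x,y)\in \mathbb{Z}_{>0}\times\mathbb{Z}_{>0} : y \le x \le y^2 \text{ and } x\le n\}\big|.$$
   Context: $\mathbb{Z}_{>0}$ denotes the set of positive integers. (This $a(n)$ is the case $m=2$ of the sequence $n-h(n)$ where each $k\ge0$ appears $2k+1$ times in $h$, $h(1)=0$.) *)

theory Defs
  imports Complex_Main
begin

definition a_seq :: "nat \<Rightarrow> int" where
  "a_seq n = int n - \<lfloor>sqrt (real n - 1)\<rfloor>"

end

theory Submission
  imports Defs
begin

definition SS :: "nat \<Rightarrow> (int \<times> int) set" where
  "SS m = {(x::int, y::int). 0 < x \<and> 0 < y \<and> y \<le> x \<and> x \<le> y^2 \<and> x \<le> int m}"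

lemma SS_fin: "finite (SS m)"
proof -
  have "SS m \<subseteq> {1..int m} \<times> {1..int m}" unfolding SS_def by auto
  thus ?thesis by (rule finite_subset) auto
qed

lemma floor_facts:
  fixes n :: nat
  defines "k \<equiv> \<lfloor>sqrt (real n)\<rfloor>"
  shows "0 \<le> k" "k^2 \<le> int n" "int n < (k+1)^2"
proof -
  show k0: "0 \<le> k" unfolding k_def by simp
  have a: "of_int k \<le> sqrt (real n)" unfolding k_def by simp
  have b: "sqrt (real n) < of_int k + 1" unfolding k_def by linarith
  have "(of_int k)^2 \<le> (sqrt (real n))^2"
    using a k0 by (intro power_mono) auto
  hence "real_of_int (k^2) \<le> real n" by simp
  thus "k^2 \<le> int n" by linarith
  have "(sqrt (real n))^2 < (of_int k + 1)^2"
    using b by (intro power_strict_mono) auto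
  hence "real n < real_of_int ((k+1)^2)" by simp
  thus "int n < (k+1)^2" by linarith
qed

lemma slice:
  fixes n :: nat and k :: int
  assumes "0 \<le> k" "k^2 \<le> int n" "int n < (k+1)^2"
  shows "{y::int. 0 < y \<and> y \<le> int n + 1 \<and> int n + 1 \<le> y^2} = {k+1..int n + 1}"
proof safe
  fix y :: int assume h: "0 < y" "y \<le> int n + 1" "int n + 1 \<le> y^2"
  show "y \<in> {k+1..int n+1}"
  proof -
    have "k + 1 \<le> y"
    proof (rule ccontr)
      assume "\<not> k + 1 \<le> y"
      hence "y \<le> k" by simp
      hence "y^2 \<le> k^2" using h(1) by (intro power_mono) auto
      thus False using h assms by linarith
    qed
    thus ?thesis using h by simp
  qed
next
  fix y :: int assume h: "y \<in> {k+1..int n+1}"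
  show "0 < y" using h assms by simp
  show "y \<le> int n + 1" using h by simp
  have "(k+1)^2 \<le> y^2" using h assms by (intro power_mono) auto
  thus "int n + 1 \<le> y^2" using assms by linarith
qed

lemma SS_Suc:
  fixes n :: nat
  defines "k \<equiv> \<lfloor>sqrt (real n)\<rfloor>"
  shows "SS (Suc n) = SS n \<union> (\<lambda>y. (int n + 1, y)) ` {k+1..int n + 1}"
proof -
  have sl: "{y::int. 0 < y \<and> y \<le> int n + 1 \<and> int n + 1 \<le> y^2} = {k+1..int n + 1}"
    using floor_facts[of n] unfolding k_def by (intro slice) auto
  have "SS (Suc n) = SS n \<union> (\<lambda>y. (int n + 1, y)) ` {y::int. 0 < y \<and> y \<le> int n + 1 \<and> int n + 1 \<le> y^2}"
    unfolding SS_def by auto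
  thus ?thesis using sl by simp
qed

lemma main_gen: "(\<Sum>i=1..n. a_seq i) = int (card (SS n))"
proof (induction n)
  case 0
  have "SS 0 = {}" unfolding SS_def by auto
  thus ?case by simp
next
  case (Suc n)
  define k where "k = \<lfloor>sqrt (real n)\<rfloor>"
  have k0: "0 \<le> k" "k^2 \<le> int n" using floor_facts[of n] unfolding k_def by auto
  have kn: "k \<le> int n"
  proof -
    have "k \<le> k^2" using k0 by (cases "k = 0") (auto simp: power2_eq_square)
    thus ?thesis using k0 by linarith
  qed
  have disj: "SS n \<inter> (\<lambda>y. (int n + 1, y)) ` {k+1..int n + 1} = {}"
    unfolding SS_def by auto
  have "card (SS (Suc n)) = card (SS n) + card ((\<lambda>y. (int n + 1, y)) ` {k+1..int n + 1})"
    unfolding SS_Suc[of n, folded k_def]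
    by (rule card_Un_disjoint) (use SS_fin disj in auto)
  also have "card ((\<lambda>y. (int n + 1, y)) ` {k+1..int n + 1}) = card {k+1..int n + 1}"
    by (rule card_image) (auto simp: inj_on_def)
  also have "\<dots> = nat (int n + 1 - k)" by simp
  finally have c: "int (card (SS (Suc n))) = int (card (SS n)) + (int n + 1 - k)"
    using kn by simp
  have "a_seq (Suc n) = int n + 1 - k" unfolding a_seq_def k_def by simp
  thus ?case using Suc c by (simp add: sum.atLeast1_atMost_eq)
qed

theorem mainTheorem4:
  fixes n :: nat
  assumes "n \<ge> 1"
  shows "(\<Sum>i=1..n. a_seq i) =
         int (card {(x::int, y::int). 0 < x \<and> 0 < y \<and> y \<le> x \<and> x \<le> y^2 \<and> x \<le> int n})"
  using main_gen[of n] unfolding SS_def .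

end
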